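(* Let $m\in\mathbb{Z}^{+}$, let $\alpha_0,\dots,\alpha_m\in(0,1]$ with $\varrho_m=\sum_{j=0}^{m}\alpha_j-1$ satisfying $0<\varrho_m\le m$, and let $y\in\Omega^{\varrho_m}_{-1}$. Then, in the field $M_{-1}$ of convolution quotients, the Dzherbashian–Nersesian operator admits the representation $$(\mathcal{D}^{\varrho_m}_{t,0+}y)(x)=S_{\varrho_m}\circ y(x)-\sum_{k=0}^{m-1}S_{\varrho_m-\varrho_{m-k}-1}\circ\big(\mathcal{D}^{\varrho_k}_{t,0+}y\big)(x)\Big|_{x=0},\qquad x>0,$$ where $(\mathcal{D}^{\varrho_k}_{t,0+}y)(x)|_{x=0}:=\lim_{x\to0+}(\mathcal{D}^{\varrho_k}_{t,0+}y)(x)$ is a constant, multiplying the corresponding element of $M_{-1}$ as a scalar.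
   Context: Riemann–Liouville integral: for $\alpha>0$, $J^{\alpha}_{t,0+}g(t)=\frac{1}{\Gamma(\alpha)}\int_0^t (t-\tau)^{\alpha-1}g(\tau)\,d\tau$, $t>0$; $J^0$ is the identity. Riemann–Liouville derivative of order $\alpha\in(0,1]$: $D^{\alpha}_{t,0+}g=\frac{d}{dt}J^{1-\alpha}_{t,0+}g$. For $\alpha_0,\dots,\alpha_m\in(0,1]$ and $k=0,\dots,m$ set $\varrho_k=\sum_{j=0}^{k}\alpha_j-1$ and define the Dzherbashian–Nersesian operators $\mathcal{D}^{\varrho_0}_{t,0+}g=J^{1-\alpha_0}_{t,0+}g$ and, for $k\ge1$, $\mathcal{D}^{\varrho_k}_{t,0+}g=J^{1-\alpha_k}_{t,0+}D^{\alpha_{k-1}}_{t,0+}\cdots D^{\alpha_1}_{t,0+}D^{\alpha_0}_{t,0+}g$. Spaces: for $\gamma\in\mathbb{R}$, $C_\gamma$ is the set of functions $g$ on $(0,\infty)$ of the form $g(t)=t^{p}g_1(t)$ with some $p>\gamma$ and $g_1\in C[0,\infty)$. $\Omega^{\varrho_m}_{-1}$ denotes the class of functions $y$ for which the operators $\mathcal{D}^{\varrho_k}_{t,0+}y$ ($k=0,\dots,m$) exist and belong to $C_{-1}$. Convolution quotients: with Laplace convolution $(g*f)(t)=\int_0^t g(t-s)f(s)\,ds$, $(C_{-1},*,+)$ is a commutative ring without zero divisors; $M_{-1}$ is its field of quotients $f/g$ ($(f,g)\sim(f_1,g_1)$ iff $f*g_1=g*f_1$), with $\frac fg+\frac{f_1}{g_1}=\frac{f*g_1+g*f_1}{g*g_1}$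 and $\frac fg\circ\frac{f_1}{g_1}=\frac{f*f_1}{g*g_1}$; $C_{-1}$ is embedded via $f\mapsto (h_\alpha*f)/h_\alpha$, where $h_\alpha(t)=t^{\alpha-1}/\Gamma(\alpha)$, $\alpha>0$. The identity is $I=h_\alpha/h_\alpha$. For $\alpha>0$, $S_\alpha:=I/h_\alpha$ (the algebraic inverse of $J^\alpha_{t,0+}$, so $J^{\alpha}_{t,0+}y=\frac{1}{S_\alpha}\circ y$); $S_0:=I$ and $S_{-\beta}:=h_\beta$ for $\beta>0$, so that $S_a\circ S_b=S_{a+b}$. Scalars multiply quotients by $\lambda\frac fg=\frac{\lambda f}{g}$. *)

theory Defs
  imports "HOL-Analysis.Analysis"
begin

definition hk :: "real \<Rightarrow> real \<Rightarrow> real" where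
  "hk a t = t powr (a - 1) / Gamma a"

definition RLint :: "real \<Rightarrow> (real \<Rightarrow> real) \<Rightarrow> real \<Rightarrow> real" where
  "RLint a g t = (if a = 0 then g t
     else (1 / Gamma a) * integral {0..t} (\<lambda>\<tau>. (t - \<tau>) powr (a - 1) * g \<tau>))"

definition RLder :: "real \<Rightarrow> (real \<Rightarrow> real) \<Rightarrow> real \<Rightarrow> real" where
  "RLder a g t = deriv (RLint (1 - a) g) t"

fun Dchain :: "(nat \<Rightarrow> real) \<Rightarrow> nat \<Rightarrow> (real \<Rightarrow> real) \<Rightarrow> real \<Rightarrow> real" where
  "Dchain al 0 y = y"
| "Dchain al (Suc k) y = RLder (al k) (Dchain al k y)"

definition DN :: "(nat \<Rightarrow> real) \<Rightarrow> nat \<Rightarrow> (real \<Rightarrow> real) \<Rightarrow> real \<Rightarrow> real" where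
  "DN al k y = RLint (1 - al k) (Dchain al k y)"

definition rho :: "(nat \<Rightarrow> real) \<Rightarrow> nat \<Rightarrow> real" where
  "rho al k = (\<Sum>j\<le>k. al j) - 1"

definition Cgam :: "real \<Rightarrow> (real \<Rightarrow> real) set" where
  "Cgam \<gamma> = {g. \<exists>p > \<gamma>. \<exists>g1. continuous_on {0..} g1 \<and> (\<forall>t>0. g t = t powr p * g1 t)}"

definition Omega :: "(nat \<Rightarrow> real) \<Rightarrow> nat \<Rightarrow> (real \<Rightarrow> real) set" where
  "Omega al m = {y. y \<in> Cgam (-1) \<and>
     (\<forall>k\<le>m. DN al k y \<in> Cgam (-1) \<and>
        (al k < 1 \<longrightarrow> (\<forall>t>0. (\<lambda>\<tau>. (t - \<tau>) powr (- al k) * Dchain al k y \<tau>) integrable_on {0..t}))) \<and>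
     (\<forall>k<m. (\<forall>t>0. DN al k y differentiable (at t)) \<and> Dchain al (Suc k) y \<in> Cgam (-1))}"

definition conv :: "(real \<Rightarrow> real) \<Rightarrow> (real \<Rightarrow> real) \<Rightarrow> real \<Rightarrow> real" where
  "conv f g t = integral {0..t} (\<lambda>s. f (t - s) * g s)"

text \<open>Convolution quotients f/g represented by pairs (f,g); equality in M_{-1}
  is the equivalence f * g1 = g * f1 (as functions on (0,inf)).\<close>
type_synonym cquot = "(real \<Rightarrow> real) \<times> (real \<Rightarrow> real)"

definition qeq :: "cquot \<Rightarrow> cquot \<Rightarrow> bool" where
  "qeq p q = (\<forall>t>0. conv (fst p) (snd q) t = conv (snd p) (fst q) t)"

definition qadd :: "cquot \<Rightarrow> cquot \<Rightarrow> cquot" where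
  "qadd p q = ((\<lambda>t. conv (fst p) (snd q) t + conv (snd p) (fst q) t), conv (snd p) (snd q))"

definition qsub :: "cquot \<Rightarrow> cquot \<Rightarrow> cquot" where
  "qsub p q = ((\<lambda>t. conv (fst p) (snd q) t - conv (snd p) (fst q) t), conv (snd p) (snd q))"

definition qmult :: "cquot \<Rightarrow> cquot \<Rightarrow> cquot" where
  "qmult p q = (conv (fst p) (fst q), conv (snd p) (snd q))"

definition qscale :: "real \<Rightarrow> cquot \<Rightarrow> cquot" where
  "qscale c p = ((\<lambda>t. c * fst p t), snd p)"

definition qembed :: "(real \<Rightarrow> real) \<Rightarrow> cquot" where
  "qembed f = (conv (hk 1) f, hk 1)"

definition qzero :: cquot where
  "qzero = ((\<lambda>t. 0), hk 1)"

definition qS :: "real \<Rightarrow> cquot" where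
  "qS a = (if 0 < a then (hk 1, conv (hk 1) (hk a))
           else if a = 0 then (hk 1, hk 1)
           else qembed (hk (- a)))"

fun qsumn :: "(nat \<Rightarrow> cquot) \<Rightarrow> nat \<Rightarrow> cquot" where
  "qsumn F 0 = qzero"
| "qsumn F (Suc n) = qadd (qsumn F n) (F n)"

end

theory Submission
  imports Defs
begin

definition K :: "real \<Rightarrow> real \<Rightarrow> real" where
  "K a x = (if 0 < x then x powr (a - 1) else 0)"

lemma K_measurable[measurable]: "K a \<in> borel_measurable borel"
  unfolding K_def by measurable

lemma K_nonneg: "0 \<le> K a x" by (simp add: K_def)

lemma hk_K: "0 \<le> x \<Longrightarrow> hk a x = K a x / Gamma a"
  by (auto simp: hk_def K_def)

lemma beta_HK:
  fixes a b t :: real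
  assumes a: "0<a" and b: "0<b" and t: "0<t"
  shows "((\<lambda>s. (t - s) powr (a-1) * s powr (b-1)) has_integral (Beta a b * t powr (a+b-1))) {0..t}"
proof -
  have "((\<lambda>u. u powr (b-1) * (1-u) powr (a-1)) has_integral Beta b a) (cbox 0 1)"
    using has_integral_Beta_real[of b a] a b by simp
  from has_integral_affinity'[OF this, of "1/t" 0] t
  have h1: "((\<lambda>x. (x/t) powr (b-1) * (1 - x/t) powr (a-1)) has_integral (t * Beta b a)) {0..t}"
    by (simp add: divide_inverse mult.commute)
  have h2: "((\<lambda>x. t powr (a+b-2) * ((x/t) powr (b-1) * (1 - x/t) powr (a-1))) has_integral (t powr (a+b-2) * (t * Beta b a))) {0..t}"
    by (rule has_integral_mult_right[OF h1])
  have e1: "t powr (a+b-2) * (t * Beta b a) = Beta a b * t powr (a+b-1)"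
  proof -
    have "t powr (a+b-1) = t powr ((a+b-2) + 1)" by simp
    also have "\<dots> = t powr (a+b-2) * t powr 1" by (rule powr_add)
    also have "\<dots> = t powr (a+b-2) * t" using t by simp
    finally show ?thesis using t by (simp add: Beta_commute)
  qed
  have e2: "t powr (a+b-2) * ((x/t) powr (b-1) * (1 - x/t) powr (a-1)) = (t - x) powr (a-1) * x powr (b-1)"
    if "x \<in> {0..t}" for x
  proof -
    have x: "0 \<le> x" "x \<le> t" using that by auto
    have "1 - x/t = (t-x)/t" using t by (simp add: field_simps)
    then have "t powr (a+b-2) * ((x/t) powr (b-1) * (1 - x/t) powr (a-1))
       = t powr (a+b-2) * (x powr (b-1) / t powr (b-1) * ((t-x) powr (a-1) / t powr (a-1)))"
      using x t by (simp add: powr_divide)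
    also have "\<dots> = (t powr (a+b-2) / (t powr (b-1) * t powr (a-1))) * ((t - x) powr (a-1) * x powr (b-1))"
      by (simp add: field_simps)
    also have "t powr (b-1) * t powr (a-1) = t powr (a+b-2)" by (simp add: powr_add[symmetric] add.commute)
    finally show ?thesis using t by simp
  qed
  show ?thesis using h2 e1 e2 by (metis (no_types, lifting) has_integral_cong)
qed

lemma betaL:
  fixes a b t :: real
  assumes a: "0<a" and b: "0<b"
  shows "integrable lborel (\<lambda>s. K a (t - s) * K b s)"
    and "(\<integral>s. K a (t - s) * K b s \<partial>lborel) = Beta a b * K (a+b) t"
proof -
  have "integrable lborel (\<lambda>s. K a (t - s) * K b s) \<and> (\<integral>s. K a (t - s) * K b s \<partial>lborel) = Beta a b * K (a+b) t"
  proof (cases "0 < t")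
    case False
    then have "(\<lambda>s. K a (t - s) * K b s) = (\<lambda>s. 0)" by (auto simp: K_def fun_eq_iff)
    then show ?thesis using False by (simp add: K_def)
  next
    case t: True
    have hI: "((\<lambda>s. K a (t - s) * K b s) has_integral (Beta a b * t powr (a+b-1))) {0..t}"
      apply (rule has_integral_cong[THEN iffD1, OF _ beta_HK[OF a b t]])
      by (auto simp: K_def)
    have hU: "((\<lambda>s. K a (t - s) * K b s) has_integral (Beta a b * t powr (a+b-1))) UNIV"
      by (rule has_integral_on_superset[OF hI]) (auto simp: K_def)
    have B: "0 \<le> Beta a b" using a b by (simp add: Beta_def)
    have "integral\<^sup>N lborel (\<lambda>s. K a (t - s) * K b s) = ennreal (Beta a b * t powr (a+b-1))"
      by (rule nn_integral_has_integral_lborel[OF _ _ hU]) (auto simp: K_nonneg)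
    then have "has_bochner_integral lborel (\<lambda>s. K a (t - s) * K b s) (Beta a b * t powr (a+b-1))"
      by (intro has_bochner_integral_nn_integral) (auto simp: K_nonneg B)
    then show ?thesis using t by (simp add: has_bochner_integral_iff K_def)
  qed
  then show "integrable lborel (\<lambda>s. K a (t - s) * K b s)"
    and "(\<integral>s. K a (t - s) * K b s \<partial>lborel) = Beta a b * K (a+b) t" by auto
qed

lemma bridge:
  fixes H h :: "real \<Rightarrow> real"
  assumes H: "integrable lborel H" and z: "\<And>r. r \<notin> {0<..<s} \<Longrightarrow> H r = 0"
    and e: "\<And>r. 0<r \<Longrightarrow> r<s \<Longrightarrow> h r = H r"
  shows "h integrable_on {0..s}" "integral {0..s} h = (\<integral>r. H r \<partial>lborel)"
proof -
  define I where "I = (\<integral>r. H r \<partial>lborel)"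
  have "(H has_integral I) UNIV" unfolding I_def by (rule has_integral_integral_lborel[OF H])
  also have "H = (\<lambda>x. if x \<in> {0..s} then H x else 0)" using z by (auto simp: fun_eq_iff)
  finally have "(H has_integral I) {0..s}"
    by (simp only: has_integral_restrict_UNIV)
  note hI = this
  have "(h has_integral I) {0..s}"
    by (rule has_integral_spike[where S="{0,s}", OF _ _ hI]) (auto intro: e)
  then show "h integrable_on {0..s}" "integral {0..s} h = (\<integral>r. H r \<partial>lborel)"
    by (auto simp: integral_unique has_integral_integrable I_def)
qed

definition GG :: "real \<Rightarrow> (real \<Rightarrow> real) \<Rightarrow> real \<Rightarrow> real" where
  "GG p g1 r = (if 0 < r then r powr p * g1 r else 0)"

lemma GG_meas:
  assumes c: "continuous_on {0..} g1"
  shows "GG p g1 \<in> borel_measurable borel"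
proof -
  have "continuous_on {0<..} g1" by (rule continuous_on_subset[OF c]) (auto simp: subset_eq)
  then have "continuous_on {0<..} (\<lambda>r::real. r powr p * g1 r)"
    by (intro continuous_intros) auto
  from borel_measurable_continuous_on_indicator[OF _ this]
  have "(\<lambda>x. indicator {0<..} x *\<^sub>R (x powr p * g1 x)) \<in> borel_measurable borel" by simp
  also have "(\<lambda>x. indicator {0<..} x *\<^sub>R (x powr p * g1 x)) = GG p g1"
    by (auto simp: fun_eq_iff GG_def indicator_def)
  finally show ?thesis .
qed

lemma GG_bound:
  assumes c: "continuous_on {0..} g1"
  shows "\<exists>C\<ge>0. \<forall>r\<le>T. \<bar>GG p g1 r\<bar> \<le> C * K (p+1) r"
proof -
  have "bounded (g1 ` {0..T})"
    by (intro compact_imp_bounded compact_continuous_image continuous_on_subset[OF c]) auto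
  then obtain B where B: "B > 0" "\<And>x. x \<in> {0..T} \<Longrightarrow> \<bar>g1 x\<bar> \<le> B"
    unfolding bounded_pos by auto
  have "\<bar>GG p g1 r\<bar> \<le> B * K (p+1) r" if "r \<le> T" for r
  proof (cases "0 < r")
    case True
    have "\<bar>r powr p * g1 r\<bar> = r powr p * \<bar>g1 r\<bar>" by (simp add: abs_mult)
    also have "\<dots> \<le> r powr p * B" using B True that by (intro mult_left_mono) auto
    finally show ?thesis using True by (simp add: GG_def K_def mult.commute)
  qed (simp add: GG_def K_def)
  then show ?thesis using B by (intro exI[of _ B]) auto
qed

lemma convbound:
  fixes G :: "real \<Rightarrow> real"
  assumes Gm: "G \<in> borel_measurable borel" and C: "0 \<le> C"
    and bnd: "\<And>r. r \<le> T \<Longrightarrow> \<bar>G r\<bar> \<le> C * K q r" and q: "0 < q" and b: "0 < b" and s: "s \<le> T"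
  shows "integrable lborel (\<lambda>r. K b (s - r) * G r)"
    and "(\<integral>r. \<bar>K b (s - r) * G r\<bar> \<partial>lborel) \<le> C * (Beta b q * K (b+q) s)"
proof -
  have fi: "integrable lborel (\<lambda>r. C * (K b (s - r) * K q r))"
    using betaL(1)[OF b q, of s] by simp
  have le: "\<bar>K b (s - r) * G r\<bar> \<le> C * (K b (s - r) * K q r)" for r
  proof (cases "r < s")
    case True
    have "\<bar>K b (s - r) * G r\<bar> = K b (s - r) * \<bar>G r\<bar>" by (simp add: abs_mult K_nonneg)
    also have "\<dots> \<le> K b (s - r) * (C * K q r)" using bnd[of r] True s
      by (intro mult_left_mono) (auto simp: K_nonneg)
    finally show ?thesis by (simp add: mult_ac)
  next
    case False then show ?thesis by (simp add: K_def)
  qed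
  show ii: "integrable lborel (\<lambda>r. K b (s - r) * G r)"
    apply (rule Bochner_Integration.integrable_bound[OF fi])
    using Gm apply measurable
    using le C by (auto simp: K_nonneg)
  have "(\<integral>r. \<bar>K b (s - r) * G r\<bar> \<partial>lborel) \<le> (\<integral>r. C * (K b (s - r) * K q r) \<partial>lborel)"
    by (intro integral_mono integrable_abs ii fi le)
  also have "\<dots> = C * (Beta b q * K (b+q) s)" using betaL(2)[OF b q, of s] by simp
  finally show "(\<integral>r. \<bar>K b (s - r) * G r\<bar> \<partial>lborel) \<le> C * (Beta b q * K (b+q) s)" .
qed

lemma convL:
  assumes p: "p > -1" and c: "continuous_on {0..} g1" and g: "\<And>t. t > 0 \<Longrightarrow> g t = t powr p * g1 t"
    and a: "0 < a" and t: "0 < t"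
  shows "integrable lborel (\<lambda>r. K a (t - r) * GG p g1 r)"
    and "(\<lambda>r. hk a (t - r) * g r) integrable_on {0..t}"
    and "conv (hk a) g t = (\<integral>r. K a (t - r) * GG p g1 r \<partial>lborel) / Gamma a"
proof -
  obtain C where C: "C \<ge> 0" "\<And>r. r \<le> t \<Longrightarrow> \<bar>GG p g1 r\<bar> \<le> C * K (p+1) r"
    using GG_bound[OF c, where p=p and T=t] by auto
  show i: "integrable lborel (\<lambda>r. K a (t - r) * GG p g1 r)"
    using convbound(1)[OF GG_meas[OF c] C(1) C(2) _ a order_refl] p by simp
  have i2: "integrable lborel (\<lambda>r. K a (t - r) * GG p g1 r / Gamma a)"
    using i by simp
  note br = bridge[OF i2, of t "\<lambda>r. hk a (t - r) * g r"]
  have z: "\<And>r. r \<notin> {0<..<t} \<Longrightarrow> K a (t - r) * GG p g1 r / Gamma a = 0"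
    by (auto simp: K_def GG_def)
  have e: "\<And>r. 0<r \<Longrightarrow> r<t \<Longrightarrow> hk a (t - r) * g r = K a (t - r) * GG p g1 r / Gamma a"
    by (simp add: hk_K g GG_def)
  show "(\<lambda>r. hk a (t - r) * g r) integrable_on {0..t}" using br z e by blast
  show "conv (hk a) g t = (\<integral>r. K a (t - r) * GG p g1 r \<partial>lborel) / Gamma a"
    using br(2)[OF z e] by (simp add: conv_def)
qed

lemma F1:
  assumes p: "p > -1" and c: "continuous_on {0..} g1" and g: "\<And>t. t > 0 \<Longrightarrow> g t = t powr p * g1 t"
    and a: "0 < a" and b: "0 < b" and t: "0 < t"
  shows "(\<lambda>s. hk a (t - s) * conv (hk b) g s) integrable_on {0..t}"
    and "conv (hk a) (conv (hk b) g) t = conv (hk (a+b)) g t"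
proof -
  define G where "G = GG p g1"
  have Gm[measurable]: "G \<in> borel_measurable borel" unfolding G_def by (rule GG_meas[OF c])
  obtain C where C: "C \<ge> 0" "\<And>r. r \<le> t \<Longrightarrow> \<bar>G r\<bar> \<le> C * K (p+1) r"
    using GG_bound[OF c, where p=p and T=t] unfolding G_def by auto
  have q: "0 < p + 1" using p by simp
  define LI where "LI s = (\<integral>r. K b (s - r) * G r \<partial>lborel)" for s
  define \<Phi> where "\<Phi> s r = K a (t - s) * (K b (s - r) * G r)" for s r
  have \<Phi>m: "(\<lambda>x. \<Phi> (fst x) (snd x)) \<in> borel_measurable (lborel \<Otimes>\<^sub>M lborel)"
    unfolding \<Phi>_def by measurable
  have \<Phi>m': "case_prod \<Phi> \<in> borel_measurable (lborel \<Otimes>\<^sub>M lborel)"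
    using \<Phi>m by (simp add: case_prod_beta')
  have int_r: "integrable lborel (\<Phi> s)" for s
  proof (cases "s \<le> t")
    case True
    then show ?thesis unfolding \<Phi>_def
      using convbound(1)[OF Gm C(1) C(2) q b True] by simp
  next
    case False
    then have "\<Phi> s = (\<lambda>r. 0)" by (auto simp: \<Phi>_def K_def fun_eq_iff)
    then show ?thesis by simp
  qed
  have absbound: "(\<integral>r. norm (\<Phi> s r) \<partial>lborel) \<le> C * Beta b (p+1) * (K a (t - s) * K (b+(p+1)) s)" for s
  proof -
    have "(\<integral>r. norm (\<Phi> s r) \<partial>lborel) = K a (t - s) * (\<integral>r. \<bar>K b (s - r) * G r\<bar> \<partial>lborel)"
      unfolding \<Phi>_def by (simp add: abs_mult K_nonneg)
    also have "\<dots> \<le> C * Beta b (p+1) * (K a (t - s) * K (b+(p+1)) s)"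
    proof (cases "s \<le> t")
      case True
      have "K a (t - s) * (\<integral>r. \<bar>K b (s - r) * G r\<bar> \<partial>lborel) \<le> K a (t - s) * (C * (Beta b (p+1) * K (b+(p+1)) s))"
        by (intro mult_left_mono convbound(2)[OF Gm C(1) C(2) q b True] K_nonneg)
      then show ?thesis by (simp add: mult_ac)
    next
      case False
      then show ?thesis by (simp add: K_def)
    qed
    finally show ?thesis .
  qed
  have Bpos: "0 \<le> Beta b (p+1)" using b q by (simp add: Beta_def)
  have integ1: "integrable lborel (\<lambda>s. \<integral>r. norm (\<Phi> s r) \<partial>lborel)"
  proof (rule Bochner_Integration.integrable_bound)
    show "integrable lborel (\<lambda>s. C * Beta b (p+1) * (K a (t - s) * K (b+(p+1)) s))"
      using betaL(1)[OF a, of "b+(p+1)" t] b q by simp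
    show "(\<lambda>s. \<integral>r. norm (\<Phi> s r) \<partial>lborel) \<in> borel_measurable lborel"
      using \<Phi>m unfolding \<Phi>_def by measurable
    show "AE s in lborel. norm (\<integral>r. norm (\<Phi> s r) \<partial>lborel) \<le> norm (C * Beta b (p+1) * (K a (t - s) * K (b+(p+1)) s))"
    proof (intro AE_I2)
      fix s
      have "0 \<le> (\<integral>r. norm (\<Phi> s r) \<partial>lborel)" by (intro integral_nonneg_AE) auto
      moreover have "0 \<le> C * Beta b (p+1) * (K a (t - s) * K (b+(p+1)) s)"
        using C(1) Bpos by (intro mult_nonneg_nonneg K_nonneg) auto
      ultimately show "norm (\<integral>r. norm (\<Phi> s r) \<partial>lborel) \<le> norm (C * Beta b (p+1) * (K a (t - s) * K (b+(p+1)) s))"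
        using absbound[of s] by simp
    qed
  qed
  have Pint: "integrable (lborel \<Otimes>\<^sub>M lborel) (case_prod \<Phi>)"
    by (rule lborel_pair.Fubini_integrable[OF \<Phi>m']) (use integ1 int_r in auto)
  have fub: "(\<integral>r. (\<integral>s. \<Phi> s r \<partial>lborel) \<partial>lborel) = (\<integral>s. (\<integral>r. \<Phi> s r \<partial>lborel) \<partial>lborel)"
    by (rule lborel_pair.Fubini_integral[OF Pint])
  have ifst: "integrable lborel (\<lambda>s. \<integral>r. \<Phi> s r \<partial>lborel)"
    by (rule lborel_pair.integrable_fst[OF Pint])
  have in1: "(\<integral>r. \<Phi> s r \<partial>lborel) = K a (t - s) * LI s" for s
    unfolding \<Phi>_def LI_def by simp
  have in2: "(\<integral>s. \<Phi> s r \<partial>lborel) = G r * (Beta a b * K (a+b) (t - r))" for r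
  proof -
    have "(\<integral>s. \<Phi> s r \<partial>lborel) = G r * (\<integral>s. K a (t - s) * K b (s - r) \<partial>lborel)"
      unfolding \<Phi>_def by (simp add: mult_ac)
    also have "(\<integral>s. K a (t - s) * K b (s - r) \<partial>lborel) = (\<integral>u. K a (t - (r + 1 * u)) * K b (r + 1 * u - r) \<partial>lborel)"
      using lborel_integral_real_affine[of 1 "\<lambda>s. K a (t - s) * K b (s - r)" r] by simp
    also have "\<dots> = (\<integral>u. K a ((t - r) - u) * K b u \<partial>lborel)" by (simp add: algebra_simps)
    also have "\<dots> = Beta a b * K (a+b) (t - r)" by (rule betaL(2)[OF a b])
    finally show ?thesis .
  qed
  have ga: "Gamma a > 0" "Gamma b > 0" "Gamma (a+b) > 0" using a b by (auto intro: Gamma_real_pos)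
  have H: "integrable lborel (\<lambda>s. K a (t - s) * LI s / (Gamma a * Gamma b))"
    using ifst unfolding in1 by simp
  have LI0: "LI s = 0" if "s \<le> 0" for s
  proof -
    have "(\<lambda>r. K b (s - r) * G r) = (\<lambda>r. 0)" using that by (auto simp: fun_eq_iff K_def G_def GG_def)
    then show ?thesis by (simp add: LI_def)
  qed
  have z: "K a (t - s) * LI s / (Gamma a * Gamma b) = 0" if "s \<notin> {0<..<t}" for s
    using that LI0[of s] by (auto simp: K_def)
  have e: "hk a (t - s) * conv (hk b) g s = K a (t - s) * LI s / (Gamma a * Gamma b)" if "0 < s" "s < t" for s
    using that convL(3)[OF p c g b, of s] by (simp add: hk_K LI_def G_def)
  note br = bridge[OF H, of t, OF z e]
  show "(\<lambda>s. hk a (t - s) * conv (hk b) g s) integrable_on {0..t}" using br(1) by blast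
  have "conv (hk a) (conv (hk b) g) t = (\<integral>s. K a (t - s) * LI s \<partial>lborel) / (Gamma a * Gamma b)"
    using br(2) by (simp add: conv_def)
  also have "(\<integral>s. K a (t - s) * LI s \<partial>lborel) = (\<integral>r. G r * (Beta a b * K (a+b) (t - r)) \<partial>lborel)"
    using fub by (simp add: in1 in2)
  also have "\<dots> = (\<integral>r. Beta a b * (K (a+b) (t - r) * G r) \<partial>lborel)"
    by (simp add: mult_ac)
  also have "\<dots> = Beta a b * (\<integral>r. K (a+b) (t - r) * G r \<partial>lborel)"
    by (rule integral_mult_right_zero)
  also have "Beta a b * (\<integral>r. K (a+b) (t - r) * G r \<partial>lborel) / (Gamma a * Gamma b) = (\<integral>r. K (a+b) (t - r) * G r \<partial>lborel) / Gamma (a+b)"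
    using ga by (simp add: Beta_def field_simps)
  also have "\<dots> = conv (hk (a+b)) g t"
    using convL(3)[OF p c g _ t, of "a+b"] a b by (simp add: G_def)
  finally show "conv (hk a) (conv (hk b) g) t = conv (hk (a+b)) g t" .
qed

lemma Cgam_rep:
  assumes "g \<in> Cgam (-1)"
  obtains p g1 where "p > -1" "continuous_on {0..} g1" "\<And>t. t > 0 \<Longrightarrow> g t = t powr p * g1 t"
  using assms unfolding Cgam_def by auto

lemma convC:
  assumes "g \<in> Cgam (-1)" "0 < a" "0 < t"
  shows "(\<lambda>r. hk a (t - r) * g r) integrable_on {0..t}"
  using assms(1) by (rule Cgam_rep) (use convL(2) assms in blast)

lemma F1C:
  assumes "g \<in> Cgam (-1)" "0 < a" "0 < b" "0 < t"
  shows "(\<lambda>s. hk a (t - s) * conv (hk b) g s) integrable_on {0..t}"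
    and "conv (hk a) (conv (hk b) g) t = conv (hk (a+b)) g t"
  using assms(1) by (rule Cgam_rep; use F1 assms in blast)+

lemma hk_Cgam: "0 < b \<Longrightarrow> hk b \<in> Cgam (-1)"
  unfolding Cgam_def
  by (rule CollectI, rule exI[of _ "b - 1"], simp, rule exI[of _ "\<lambda>_. 1 / Gamma b"])
     (auto simp: hk_def)

lemma const_Cgam: "(\<lambda>_. c) \<in> Cgam (-1)"
  unfolding Cgam_def
  by (rule CollectI, rule exI[of _ 0], simp, rule exI[of _ "\<lambda>_. c"]) auto

lemma hkhk:
  assumes a: "0 < a" and b: "0 < b" and t: "0 < t"
  shows "conv (hk a) (hk b) t = hk (a+b) t"
proof -
  have p: "b - 1 > -1" using b by simp
  have c: "continuous_on {0..} (\<lambda>_::real. 1 / Gamma b)" by simp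
  have g: "\<And>t. t > 0 \<Longrightarrow> hk b t = t powr (b - 1) * (1 / Gamma b)" by (simp add: hk_def)
  have GG: "GG (b - 1) (\<lambda>_. 1 / Gamma b) r = K b r / Gamma b" for r
    by (simp add: GG_def K_def)
  have ga: "Gamma a > 0" "Gamma b > 0" "Gamma (a+b) > 0" using a b by (auto intro: Gamma_real_pos)
  have "conv (hk a) (hk b) t = (\<integral>r. K a (t - r) * K b r / Gamma b \<partial>lborel) / Gamma a"
    using convL(3)[OF p c g a t] by (simp add: GG)
  also have "\<dots> = Beta a b * K (a+b) t / (Gamma a * Gamma b)"
    using betaL(2)[OF a b, of t] by simp
  also have "\<dots> = hk (a+b) t" using ga t by (simp add: Beta_def hk_K)
  finally show ?thesis .
qed

lemma hk1: "0 < x \<Longrightarrow> hk 1 x = 1" by (simp add: hk_def)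

lemma refl_has_int:
  fixes F :: "real \<Rightarrow> real"
  assumes "(F has_integral i) {0..t}"
  shows "((\<lambda>s. F (t - s)) has_integral i) {0..t}"
proof -
  have "((\<lambda>x. F (1 *\<^sub>R x + t)) has_integral (i /\<^sub>R 1 ^ DIM(real))) (cbox ((0 - t) /\<^sub>R 1) ((t - t) /\<^sub>R 1))"
    by (rule has_integral_affinity') (use assms in auto)
  then have "((\<lambda>x. F (t + x)) has_integral i) {-t..0}" by (simp add: add.commute)
  from has_integral_reflect_real[of "\<lambda>x. F (t + x)" i 0 "-t", THEN iffD2, OF this]
  show ?thesis by simp
qed

lemma refl_int:
  fixes F :: "real \<Rightarrow> real"
  shows "integral {0..t} (\<lambda>s. F (t - s)) = integral {0..t} F"
proof (cases "F integrable_on {0..t}")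
  case True
  then show ?thesis using refl_has_int[OF integrable_integral[OF True]] by (simp add: integral_unique)
next
  case False
  have "\<not> (\<lambda>s. F (t - s)) integrable_on {0..t}"
  proof
    assume "(\<lambda>s. F (t - s)) integrable_on {0..t}"
    from refl_has_int[OF integrable_integral[OF this]] False show False by auto
  qed
  then show ?thesis using False by (simp add: not_integrable_integral)
qed

lemma conv_comm: "conv f g t = conv g f t"
  unfolding conv_def
  using refl_int[where F="\<lambda>s. g (t - s) * f s" and t=t] by (simp add: mult.commute)

lemma conv_cong:
  assumes f: "\<And>x. 0 < x \<Longrightarrow> f x = f' x" and g: "\<And>x. 0 < x \<Longrightarrow> g x = g' x"
  shows "conv f g t = conv f' g' t"
  unfolding conv_def
  by (rule integral_spike[where S="{0,t}"]) (auto simp: f g)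

lemma RLint_conv: "0 < a \<Longrightarrow> RLint a g t = conv (hk a) g t"
  unfolding RLint_def conv_def hk_def
  by (simp add: integral_mult_right[symmetric] mult_ac)

lemma FTC:
  assumes d: "\<forall>t>0. f differentiable (at t)" and fd: "deriv f \<in> Cgam (-1)"
  shows "\<exists>c. (f \<longlongrightarrow> c) (at_right 0) \<and> (\<forall>t>0. f t = c + conv (hk 1) (deriv f) t)"
proof -
  define I where "I x = integral {0..x} (deriv f)" for x
  have ii: "deriv f integrable_on {0..t}" if "0 < t" for t
  proof (rule integrable_spike[OF convC[OF fd zero_less_one that], where S="{t}"])
    show "\<And>x. x \<in> {0..t} - {t} \<Longrightarrow> deriv f x = hk 1 (t - x) * deriv f x" by (auto simp: hk1)
  qed auto
  have cI: "conv (hk 1) (deriv f) t = I t" if "0 < t" for t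
    unfolding conv_def I_def by (rule integral_spike[where S="{t}"]) (auto simp: hk1)
  have step: "f t - I t = f s - I s" if "0 < s" "s \<le> t" for s t
  proof -
    have "(deriv f has_integral (f t - f s)) {s..t}"
    proof (rule fundamental_theorem_of_calculus[OF that(2)])
      fix x assume "x \<in> {s..t}"
      then have "f differentiable (at x)" using d that by auto
      then have "(f has_real_derivative deriv f x) (at x)" by (simp add: DERIV_deriv_iff_real_differentiable)
      then show "(f has_vector_derivative deriv f x) (at x within {s..t})"
        by (simp add: has_real_derivative_iff_has_vector_derivative has_vector_derivative_at_within)
    qed
    moreover have "I t = I s + integral {s..t} (deriv f)"
    proof -
      have "deriv f integrable_on {0..t}" using ii that by auto
      then show ?thesis unfolding I_def using that Henstock_Kurzweil_Integration.integral_combine[where a=0 and c=s and b=t and f="deriv f"] by auto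
    qed
    ultimately show ?thesis by (simp add: integral_unique)
  qed
  define c where "c = f 1 - I 1"
  have fc: "f t = c + I t" if "0 < t" for t
  proof (cases "t \<le> 1")
    case True then show ?thesis using step[OF that True] by (simp add: c_def)
  next
    case False then show ?thesis using step[of 1 t] by (simp add: c_def)
  qed
  have "(I \<longlongrightarrow> I 0) (at_right 0)"
    by (rule continuous_on_Icc_at_rightD) (use indefinite_integral_continuous_1[OF ii[of 1]] in \<open>auto simp: I_def\<close>)
  then have "(I \<longlongrightarrow> 0) (at_right 0)" by (simp add: I_def)
  then have lim: "((\<lambda>t. c + I t) \<longlongrightarrow> c + 0) (at_right 0)" by (intro tendsto_intros)
  have ev: "\<forall>\<^sub>F t in at_right 0. f t = c + I t"
    using eventually_at_right_less[of "0::real"] by eventually_elim (use fc in auto)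
  have "(f \<longlongrightarrow> c) (at_right 0)"
    using tendsto_cong[OF ev] lim by simp
  moreover have "\<forall>t>0. f t = c + conv (hk 1) (deriv f) t" using fc cI by auto
  ultimately show ?thesis by blast
qed

lemma conv_cmult: "conv f (\<lambda>x. c * g x) t = c * conv f g t"
  unfolding conv_def by (simp add: mult_ac)

lemma L0:
  fixes n :: nat
  assumes a: "0 < a" and t: "0 < t" and e: "\<And>k. k < n \<Longrightarrow> 0 < e k"
  shows "(\<lambda>s. hk a (t - s) * (\<Sum>k<n. c k * hk (e k) s)) integrable_on {0..t}"
    and "conv (hk a) (\<lambda>x. \<Sum>k<n. c k * hk (e k) x) t = (\<Sum>k<n. c k * hk (a + e k) t)"
proof -
  have ik: "(\<lambda>s. c k * (hk a (t - s) * hk (e k) s)) integrable_on {0..t}" if "k < n" for k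
    using convC[OF hk_Cgam[OF e[OF that]] a t] by (rule integrable_on_mult_right)
  have eq: "(\<lambda>s. hk a (t - s) * (\<Sum>k<n. c k * hk (e k) s)) = (\<lambda>s. \<Sum>k<n. c k * (hk a (t - s) * hk (e k) s))"
    by (simp add: sum_distrib_left mult_ac)
  show "(\<lambda>s. hk a (t - s) * (\<Sum>k<n. c k * hk (e k) s)) integrable_on {0..t}"
    unfolding eq by (intro integrable_sum) (use ik in auto)
  have "conv (hk a) (\<lambda>x. \<Sum>k<n. c k * hk (e k) x) t = integral {0..t} (\<lambda>s. \<Sum>k<n. c k * (hk a (t - s) * hk (e k) s))"
    unfolding conv_def eq ..
  also have "\<dots> = (\<Sum>k<n. integral {0..t} (\<lambda>s. c k * (hk a (t - s) * hk (e k) s)))"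
    by (intro integral_sum) (use ik in auto)
  also have "\<dots> = (\<Sum>k<n. c k * hk (a + e k) t)"
  proof (intro sum.cong refl)
    fix k assume "k \<in> {..<n}"
    then have "conv (hk a) (hk (e k)) t = hk (a + e k) t" using hkhk[OF a e t] by auto
    then show "integral {0..t} (\<lambda>s. c k * (hk a (t - s) * hk (e k) s)) = c k * hk (a + e k) t"
      by (simp add: conv_def)
  qed
  finally show "conv (hk a) (\<lambda>x. \<Sum>k<n. c k * hk (e k) x) t = (\<Sum>k<n. c k * hk (a + e k) t)" .
qed

lemma L1:
  fixes n :: nat
  assumes a: "0 < a" and t: "0 < t" and e: "\<And>k. k < n \<Longrightarrow> 0 < e k"
    and f: "(\<lambda>s. hk a (t - s) * f s) integrable_on {0..t}"
  shows "conv (hk a) (\<lambda>x. f x - (\<Sum>k<n. c k * hk (e k) x)) t = conv (hk a) f t - (\<Sum>k<n. c k * hk (a + e k) t)"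
proof -
  have "conv (hk a) (\<lambda>x. f x - (\<Sum>k<n. c k * hk (e k) x)) t
     = integral {0..t} (\<lambda>s. hk a (t - s) * f s - hk a (t - s) * (\<Sum>k<n. c k * hk (e k) s))"
    unfolding conv_def by (simp add: right_diff_distrib)
  also have "\<dots> = conv (hk a) f t - conv (hk a) (\<lambda>x. \<Sum>k<n. c k * hk (e k) x) t"
    unfolding conv_def by (rule integral_diff[OF f L0(1)[OF a t e]])
  also have "\<dots> = conv (hk a) f t - (\<Sum>k<n. c k * hk (a + e k) t)"
    using L0(2)[OF a t e] by simp
  finally show ?thesis .
qed

definition sig :: "real \<Rightarrow> real" where "sig a = (if 0 < a then 1 + a else 1)"
definition tau :: "real \<Rightarrow> real" where "tau a = (if a < 0 then 1 - a else 1)"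

lemma sig_tau: "sig a - a = tau a" "sig a \<ge> 1" "tau a \<ge> 1"
  by (auto simp: sig_def tau_def)

lemma qS_fst: "0 < x \<Longrightarrow> fst (qS a) x = hk (tau a) x"
  by (auto simp: qS_def qembed_def tau_def hkhk)

lemma qS_snd: "0 < x \<Longrightarrow> snd (qS a) x = hk (sig a) x"
  by (auto simp: qS_def qembed_def sig_def hkhk)

lemma qsumn_rep:
  fixes c a :: "nat \<Rightarrow> real"
  defines "E \<equiv> \<lambda>n. 1 + (\<Sum>j<n. sig (a j))"
  shows "(\<forall>x>0. snd (qsumn (\<lambda>k. qscale (c k) (qS (a k))) n) x = hk (E n) x) \<and>
         (\<forall>x>0. fst (qsumn (\<lambda>k. qscale (c k) (qS (a k))) n) x = (\<Sum>k<n. c k * hk (E n - a k) x))"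
proof (induction n)
  case 0
  then show ?case by (simp add: qzero_def E_def)
next
  case (Suc n)
  let ?Q = "qsumn (\<lambda>k. qscale (c k) (qS (a k))) n"
  have Epos: "0 < E n" unfolding E_def by (smt (verit) sig_tau(2) sum_nonneg)
  have Eak: "0 < E n - a k" if "k < n" for k
  proof -
    have "sig (a k) \<le> (\<Sum>j<n. sig (a j))"
      by (rule member_le_sum) (use that sig_tau(2) in \<open>auto intro: order_trans[OF zero_le_one]\<close>)
    then show ?thesis using sig_tau[of "a k"] unfolding E_def by linarith
  qed
  have ES: "E (Suc n) = E n + sig (a n)" by (simp add: E_def)
  have sigp: "0 < sig (a n)" "0 < tau (a n)" using sig_tau[of "a n"] by auto
  have snd: "snd (qsumn (\<lambda>k. qscale (c k) (qS (a k))) (Suc n)) x = hk (E (Suc n)) x" if x: "0 < x" for x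
  proof -
    have "snd (qsumn (\<lambda>k. qscale (c k) (qS (a k))) (Suc n)) x = conv (snd ?Q) (snd (qS (a n))) x"
      by (simp add: qadd_def qscale_def)
    also have "\<dots> = conv (hk (E n)) (hk (sig (a n))) x"
      by (rule conv_cong) (use Suc.IH qS_snd in auto)
    also have "\<dots> = hk (E (Suc n)) x" using hkhk[OF Epos sigp(1) x] ES by simp
    finally show ?thesis .
  qed
  have fst: "fst (qsumn (\<lambda>k. qscale (c k) (qS (a k))) (Suc n)) x = (\<Sum>k<Suc n. c k * hk (E (Suc n) - a k) x)"
    if x: "0 < x" for x
  proof -
    have "fst (qsumn (\<lambda>k. qscale (c k) (qS (a k))) (Suc n)) x
        = conv (fst ?Q) (snd (qS (a n))) x + conv (snd ?Q) (\<lambda>t. c n * fst (qS (a n)) t) x"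
      by (simp add: qadd_def qscale_def)
    also have "conv (fst ?Q) (snd (qS (a n))) x = conv (\<lambda>x. \<Sum>k<n. c k * hk (E n - a k) x) (hk (sig (a n))) x"
      by (rule conv_cong) (use Suc.IH qS_snd in auto)
    also have "\<dots> = conv (hk (sig (a n))) (\<lambda>x. \<Sum>k<n. c k * hk (E n - a k) x) x" by (rule conv_comm)
    also have "\<dots> = (\<Sum>k<n. c k * hk (sig (a n) + (E n - a k)) x)"
      by (rule L0(2)[OF sigp(1) x]) (use Eak in auto)
    also have "conv (snd ?Q) (\<lambda>t. c n * fst (qS (a n)) t) x = conv (hk (E n)) (\<lambda>t. c n * hk (tau (a n)) t) x"
      by (rule conv_cong) (use Suc.IH qS_fst in auto)
    also have "\<dots> = c n * hk (E n + tau (a n)) x" using hkhk[OF Epos sigp(2) x] by (simp add: conv_cmult)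
    finally show ?thesis using ES sig_tau(1)[of "a n"]
      by (simp add: algebra_simps)
  qed
  show ?case using snd fst by blast
qed

lemma E_pos:
  fixes a :: "nat \<Rightarrow> real"
  shows "0 < 1 + (\<Sum>j<n. sig (a j))" and "k < n \<Longrightarrow> 0 < 1 + (\<Sum>j<n. sig (a j)) - a k"
proof -
  show "0 < 1 + (\<Sum>j<n. sig (a j))" by (smt (verit) sig_tau(2) sum_nonneg)
  assume k: "k < n"
  have "sig (a k) \<le> (\<Sum>j<n. sig (a j))"
    by (rule member_le_sum) (use k sig_tau(2) in \<open>auto intro: order_trans[OF zero_le_one]\<close>)
  then show "0 < 1 + (\<Sum>j<n. sig (a j)) - a k" using sig_tau[of "a k"] by linarith
qed

theorem theorem3p6:
  fixes m :: nat and al :: "nat \<Rightarrow> real" and y :: "real \<Rightarrow> real"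
  assumes "1 \<le> m"
    and "\<forall>j\<le>m. 0 < al j \<and> al j \<le> 1"
    and "0 < rho al m" and "rho al m \<le> real m"
    and "y \<in> Omega al m"
  shows "(\<forall>k<m. \<exists>c. (DN al k y \<longlongrightarrow> c) (at_right 0)) \<and>
    qeq (qembed (DN al m y))
        (qsub (qmult (qS (rho al m)) (qembed y))
              (qsumn (\<lambda>k. qscale (Lim (at_right 0) (DN al k y)) (qS (rho al m - rho al k - 1))) m))"
proof -
  note al = assms(2)
  have yC: "y \<in> Cgam (-1)" using assms(5) by (simp add: Omega_def)
  have NC: "DN al k y \<in> Cgam (-1)" if "k \<le> m" for k using assms(5) that by (simp add: Omega_def)
  have Dd: "\<forall>t>0. DN al k y differentiable (at t)" if "k < m" for k using assms(5) that by (simp add: Omega_def)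
  have DC: "Dchain al (Suc k) y \<in> Cgam (-1)" if "k < m" for k using assms(5) that by (simp add: Omega_def)
  have Dder: "Dchain al (Suc k) y = deriv (DN al k y)" for k by (simp add: DN_def RLder_def[abs_def])
  define c where "c k = Lim (at_right 0) (DN al k y)" for k
  have FT: "(DN al k y \<longlongrightarrow> c k) (at_right 0) \<and> (\<forall>t>0. DN al k y t = c k + conv (hk 1) (Dchain al (Suc k) y) t)"
    if k: "k < m" for k
  proof -
    obtain c' where c': "(DN al k y \<longlongrightarrow> c') (at_right 0)" "\<forall>t>0. DN al k y t = c' + conv (hk 1) (deriv (DN al k y)) t"
      using FTC[OF Dd[OF k]] DC[OF k] unfolding Dder by blast
    have "c k = c'" unfolding c_def using c'(1) by (intro tendsto_Lim) auto
    then show ?thesis using c' Dder by auto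
  qed
  have rho_pos: "0 < rho al k + 1" if "k \<le> m" for k
  proof -
    have "al 0 \<le> (\<Sum>j\<le>k. al j)"
      by (rule member_le_sum) (use al that in \<open>auto intro: less_imp_le\<close>)
    then show ?thesis using al by (simp add: rho_def) (smt (verit) le0)
  qed
  have rho_Suc: "rho al (Suc k) = rho al k + al (Suc k)" for k by (simp add: rho_def)
  have RL: "RLint a g = conv (hk a) g" if "0 < a" for a g by (rule ext, rule RLint_conv[OF that])
  have Core: "\<forall>t>0. conv (hk (rho al k + 1)) (DN al k y) t = conv (hk 1) y t - (\<Sum>j<k. c j * hk (rho al j + 2) t)"
    if "k \<le> m" for k
    using that
  proof (induction k)
    case 0
    have r0: "rho al 0 + 1 = al 0" by (simp add: rho_def)
    show ?case
    proof (cases "al 0 = 1")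
      case True
      then show ?thesis using r0 by (simp add: DN_def RLint_def[abs_def])
    next
      case False
      then have a0: "0 < al 0" "0 < 1 - al 0" using al by auto
      show ?thesis
      proof (intro allI impI)
        fix t :: real assume t: "0 < t"
        have "conv (hk (rho al 0 + 1)) (DN al 0 y) t = conv (hk (al 0)) (conv (hk (1 - al 0)) y) t"
          using r0 a0 by (simp add: DN_def RL)
        also have "\<dots> = conv (hk 1) y t" using F1C(2)[OF yC a0 t] by simp
        finally show "conv (hk (rho al 0 + 1)) (DN al 0 y) t = conv (hk 1) y t - (\<Sum>j<0. c j * hk (rho al j + 2) t)"
          by simp
      qed
    qed
  next
    case (Suc k)
    then have k: "k < m" by simp
    have IH: "\<forall>t>0. conv (hk (rho al k + 1)) (DN al k y) t = conv (hk 1) y t - (\<Sum>j<k. c j * hk (rho al j + 2) t)"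
      using Suc by simp
    define a where "a = rho al k + 1"
    define b where "b = al (Suc k)"
    have a: "0 < a" using rho_pos[of k] k unfolding a_def by simp
    have b: "0 < b" "b \<le> 1" using al Suc.prems unfolding b_def by auto
    define D where "D = Dchain al (Suc k) y"
    have DCk: "D \<in> Cgam (-1)" unfolding D_def by (rule DC[OF k])
    have rs: "rho al (Suc k) + 1 = a + b" unfolding a_def b_def rho_Suc by simp
    show ?case
    proof (intro allI impI)
      fix t :: real assume t: "0 < t"
      have i: "conv (hk (rho al (Suc k) + 1)) (DN al (Suc k) y) t = conv (hk (a + 1)) D t"
      proof (cases "b = 1")
        case True
        then show ?thesis unfolding rs by (simp add: DN_def RLint_def[abs_def] D_def b_def)
      next
        case False
        then have b1: "0 < 1 - b" using b by simp
        have "conv (hk (rho al (Suc k) + 1)) (DN al (Suc k) y) t = conv (hk (a + b)) (conv (hk (1 - b)) D) t"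
          unfolding rs using b1 by (simp add: DN_def RL D_def b_def)
        also have "\<dots> = conv (hk (a + b + (1 - b))) D t" by (rule F1C(2)[OF DCk _ b1 t]) (use a b in simp)
        finally show ?thesis by simp
      qed
      also have "\<dots> = conv (hk a) (conv (hk 1) D) t" using F1C(2)[OF DCk a zero_less_one t] by simp
      also have "\<dots> = conv (hk a) (\<lambda>x. DN al k y x - (\<Sum>j<(1::nat). c k * hk 1 x)) t"
        by (rule conv_cong) (use FT[OF k] in \<open>auto simp: hk1 D_def\<close>)
      also have "\<dots> = conv (hk a) (DN al k y) t - (\<Sum>j<(1::nat). c k * hk (a + 1) t)"
        by (rule L1[OF a t]) (use convC[OF NC a t] k in auto)
      also have "\<dots> = conv (hk 1) y t - (\<Sum>j<Suc k. c j * hk (rho al j + 2) t)"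
        using IH t unfolding a_def by (simp add: add_ac)
      finally show "conv (hk (rho al (Suc k) + 1)) (DN al (Suc k) y) t = conv (hk 1) y t - (\<Sum>j<Suc k. c j * hk (rho al j + 2) t)" .
    qed
  qed
  have Cm: "\<forall>t>0. conv (hk (rho al m + 1)) (DN al m y) t = conv (hk 1) y t - (\<Sum>j<m. c j * hk (rho al j + 2) t)"
    using Core[of m] by simp
  define \<rho> where "\<rho> = rho al m"
  define a where "a k = \<rho> - rho al k - 1" for k
  define E where "E = 1 + (\<Sum>j<m. sig (a j))"
  define Sg where "Sg = qsumn (\<lambda>k. qscale (c k) (qS (a k))) m"
  have sumeq: "(\<lambda>k. qscale (Lim (at_right 0) (DN al k y)) (qS (rho al m - rho al k - 1))) = (\<lambda>k. qscale (c k) (qS (a k)))"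
    by (simp add: c_def a_def \<rho>_def)
  have sS: "\<And>x. 0 < x \<Longrightarrow> snd Sg x = hk E x" and fS: "\<And>x. 0 < x \<Longrightarrow> fst Sg x = (\<Sum>k<m. c k * hk (E - a k) x)"
    using qsumn_rep[of c a m] unfolding Sg_def E_def by auto
  have Epos: "0 < E" unfolding E_def by (rule E_pos(1))
  have Eak: "0 < E - a k" if "k < m" for k unfolding E_def using E_pos(2)[OF that] .
  have rj: "0 < rho al j + 2" if "j < m" for j using rho_pos[of j] that by simp
  have rpos: "0 < \<rho>" using assms(3) by (simp add: \<rho>_def)
  have NCm: "DN al m y \<in> Cgam (-1)" by (rule NC) simp
  define SA where "SA = conv (conv (hk 1) (hk \<rho>)) (hk 1)"
  define FA where "FA = conv (hk 1) (conv (hk 1) y)"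
  have SAx: "SA x = hk (\<rho> + 2) x" if x: "0 < x" for x
  proof -
    have "SA x = conv (hk (1 + \<rho>)) (hk 1) x"
      unfolding SA_def by (rule conv_cong) (use hkhk rpos in auto)
    also have "\<dots> = hk (\<rho> + 2) x" using hkhk[of "1 + \<rho>" 1 x] rpos x by (simp add: add_ac)
    finally show ?thesis .
  qed
  have FAx: "FA x = conv (hk 2) y x" if x: "0 < x" for x
    unfolding FA_def using F1C(2)[OF yC zero_less_one zero_less_one x] by simp
  have main: "conv (conv (hk 1) (DN al m y)) (conv SA (snd Sg)) t = conv (hk 1) (\<lambda>t. conv FA (snd Sg) t - conv SA (fst Sg) t) t"
    if t: "0 < t" for t
  proof -
    have E2: "0 < E + 2" using Epos by simp
    have pe: "0 < \<rho> + 2 + E" using Epos rpos by simp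
    have "conv (conv (hk 1) (DN al m y)) (conv SA (snd Sg)) t = conv (conv (hk 1) (DN al m y)) (hk (\<rho> + 2 + E)) t"
    proof (rule conv_cong)
      fix x :: real assume x: "0 < x"
      have "conv SA (snd Sg) x = conv (hk (\<rho> + 2)) (hk E) x" by (rule conv_cong) (use SAx sS in auto)
      also have "\<dots> = hk (\<rho> + 2 + E) x" by (rule hkhk) (use rpos Epos x in auto)
      finally show "conv SA (snd Sg) x = hk (\<rho> + 2 + E) x" .
    qed simp
    also have "\<dots> = conv (hk (\<rho> + 2 + E)) (conv (hk 1) (DN al m y)) t" by (rule conv_comm)
    also have "\<dots> = conv (hk (\<rho> + 2 + E + 1)) (DN al m y) t" by (rule F1C(2)[OF NCm pe zero_less_one t])
    also have "\<dots> = conv (hk (E + 2)) (conv (hk (\<rho> + 1)) (DN al m y)) t"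
      using F1C(2)[OF NCm E2 _ t, of "\<rho> + 1"] rpos by (simp add: add_ac)
    also have "\<dots> = conv (hk (E + 2)) (\<lambda>x. conv (hk 1) y x - (\<Sum>j<m. c j * hk (rho al j + 2) x)) t"
      by (rule conv_cong) (use Cm in \<open>auto simp: \<rho>_def\<close>)
    also have "\<dots> = conv (hk (E + 2)) (conv (hk 1) y) t - (\<Sum>j<m. c j * hk (E + 2 + (rho al j + 2)) t)"
      by (rule L1[OF E2 t]) (use rj F1C(1)[OF yC E2 zero_less_one t] in auto)
    also have "\<dots> = conv (hk (E + 3)) y t - (\<Sum>j<m. c j * hk (E + 4 + rho al j) t)"
      using F1C(2)[OF yC E2 zero_less_one t] by (simp add: add_ac)
    finally have LHS: "conv (conv (hk 1) (DN al m y)) (conv SA (snd Sg)) t = conv (hk (E + 3)) y t - (\<Sum>j<m. c j * hk (E + 4 + rho al j) t)" .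
    have pk: "0 < \<rho> + 2 + (E - a k)" if "k < m" for k using Eak[OF that] rpos by simp
    have "conv (hk 1) (\<lambda>t. conv FA (snd Sg) t - conv SA (fst Sg) t) t
        = conv (hk 1) (\<lambda>x. conv (hk (E + 2)) y x - (\<Sum>k<m. c k * hk (\<rho> + 2 + (E - a k)) x)) t"
    proof (rule conv_cong)
      fix x :: real assume x: "0 < x"
      have "conv FA (snd Sg) x = conv (conv (hk 2) y) (hk E) x" by (rule conv_cong) (use FAx sS in auto)
      also have "\<dots> = conv (hk E) (conv (hk 2) y) x" by (rule conv_comm)
      also have "\<dots> = conv (hk (E + 2)) y x" by (rule F1C(2)[OF yC Epos _ x]) simp
      finally have 1: "conv FA (snd Sg) x = conv (hk (E + 2)) y x" .
      have "conv SA (fst Sg) x = conv (hk (\<rho> + 2)) (\<lambda>x. \<Sum>k<m. c k * hk (E - a k) x) x"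
        by (rule conv_cong) (use SAx fS in auto)
      also have "\<dots> = (\<Sum>k<m. c k * hk (\<rho> + 2 + (E - a k)) x)"
        by (rule L0(2)) (use rpos x Eak in auto)
      finally show "conv FA (snd Sg) x - conv SA (fst Sg) x = conv (hk (E + 2)) y x - (\<Sum>k<m. c k * hk (\<rho> + 2 + (E - a k)) x)"
        using 1 by simp
    qed simp
    also have "\<dots> = conv (hk 1) (conv (hk (E + 2)) y) t - (\<Sum>k<m. c k * hk (1 + (\<rho> + 2 + (E - a k))) t)"
      by (rule L1[OF zero_less_one t]) (use pk F1C(1)[OF yC zero_less_one E2 t] in auto)
    also have "\<dots> = conv (hk (E + 3)) y t - (\<Sum>k<m. c k * hk (1 + (\<rho> + 2 + (E - a k))) t)"
      using F1C(2)[OF yC zero_less_one E2 t] by (simp add: add_ac)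
    also have "(\<Sum>k<m. c k * hk (1 + (\<rho> + 2 + (E - a k))) t) = (\<Sum>j<m. c j * hk (E + 4 + rho al j) t)"
    proof (intro sum.cong refl)
      fix k assume "k \<in> {..<m}"
      have eq: "1 + (\<rho> + 2 + (E - a k)) = E + 4 + rho al k" by (simp add: a_def)
      show "c k * hk (1 + (\<rho> + 2 + (E - a k))) t = c k * hk (E + 4 + rho al k) t" by (simp only: eq)
    qed
    finally show ?thesis using LHS by simp
  qed
  have qSr: "qS (rho al m) = (hk 1, conv (hk 1) (hk \<rho>))" using rpos by (simp add: qS_def \<rho>_def)
  have P2: "qeq (qembed (DN al m y)) (qsub (qmult (qS (rho al m)) (qembed y)) Sg)"
    unfolding qeq_def qsub_def qmult_def qembed_def qSr
    using main by (simp add: SA_def FA_def)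
  show ?thesis
    using P2 FT unfolding sumeq Sg_def by blast
qed

end
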